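(* Let $\mathbb X$ be the stationary Markov chain on $I\cup\mathcal E$ with transition matrix $P^\pi$ and stationary law $\pi$, let $\mathbb Y^{(\mathcal A)}$ be the stationary Markov chain on $I^2\times\mathcal E^*$ with transition matrix $\mathcal A$ and stationary law $\eta$, and let $\mathbb G$ be an i.i.d. sequence on $\mathcal E$ with law $\pi(\delta\mid\mathcal E)=\pi(\delta)/\pi(\mathcal E)$, so $h(\mathbb G)=-\sum_{\delta\in\mathcal E}\pi(\delta\mid\mathcal E)\log\pi(\delta\mid\mathcal E)$. Then $$h(\mathbb X)=\pi(I)\,h(\mathbb Y^{(\mathcal A)})+\pi(\mathcal E)^2h(\mathbb G)-\pi(I)\pi(\mathcal E)\log\pi(I)-\pi(\mathcal E)^2\log\pi(\mathcal E).$$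
   Context: $I$ and $\mathcal E$ are disjoint countable sets, $\mathcal E\ne\emptyset$; $P$ is a stochastic matrix on $I\cup\mathcal E$ with all $\epsilon\in\mathcal E$ absorbing, irreducible restriction $P_I$ to $I$, $\sum_{i\in I}P(i,\mathcal E)>0$ where $P(i,\mathcal E)=\sum_{\epsilon\in\mathcal E}P(i,\epsilon)$, and $\mathcal E$ reached a.s. from every $i\in I$. $\mu$ is a quasi-stationary distribution of $P_I$: a probability on $I$ with $\mu^tP_I=\gamma\mu^t$, $\gamma=\sum_{i,j\in I}\mu(i)P(i,j)\in(0,1)$. $\pi$ is the probability on $I\cup\mathcal E$ with $\pi(i)=\gamma\mu(i)$ ($i\in I$), $\pi(\epsilon)=\sum_{i\in I}\mu(i)P(i,\epsilon)$ ($\epsilon\in\mathcal E$); $\pi(I)=\gamma$, $\pi(\mathcal E)=1-\gamma$. $P^\pi$ equals $P$ on rows $i\in I$ and has every row $\epsilon\in\mathcal E$ equal to $\pi$; $\pi$ is stationary for $P^\pi$. Let $\mathcal E^*=\mathcal E\cup\{o\}$, $o\notin I\cup\mathcal E$. The matrix $\mathcal A$ on $I^2\times\mathcal E^*$: $\mathcal A((i,j,\delta),(l,k,\epsilon))=0$ if $l\ne j$, $=P(j,k)$ if $l=j,\epsilon=o$, $=P(j,\epsilon)\mu(k)$ if $l=j,\epsilon\in\mathcal E$; its stationary law is $\eta(i,j,\delta)=\mu(i)P(i,j)\mathbf 1(\delta=o)+\mu(i)P(i,\delta)\mu(j)\mathbf 1(\delta\in\mathcal E)$. For a stationary Markov chain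 $\mathbb Z$ with transition matrix $R$ and stationary law $\nu$, $h(\mathbb Z)=-\sum_a\nu(a)\sum_bR(a,b)\log R(a,b)$ (with $0\log0=0$). *)

theory Defs
  imports "HOL-Analysis.Analysis"
begin

text \<open>Entropy rate of a stationary Markov chain on the countable state set S with
  transition matrix R and stationary law nu:
  h = - sum_a nu(a) sum_b R(a,b) log R(a,b), with 0 log 0 = 0 (ln 0 = 0 in Isabelle).
  Every summand is nonnegative (R(a,b) in [0,1]), so the value is taken in [0,\<infinity>].\<close>
definition ent_rate :: "('s \<Rightarrow> 's \<Rightarrow> real) \<Rightarrow> ('s \<Rightarrow> real) \<Rightarrow> 's set \<Rightarrow> ennreal" where
  "ent_rate R \<nu> S =
     (\<integral>\<^sup>+ a. ennreal (\<nu> a) * (\<integral>\<^sup>+ b. ennreal (- (R a b * ln (R a b))) \<partial>count_space S) \<partial>count_space S)"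

primrec hit_prob :: "'a set \<Rightarrow> 'a set \<Rightarrow> ('a \<Rightarrow> 'a \<Rightarrow> real) \<Rightarrow> nat \<Rightarrow> 'a \<Rightarrow> real" where
  "hit_prob I E P 0 x = (if x \<in> E then 1 else 0)"
| "hit_prob I E P (Suc n) x =
     (if x \<in> E then 1 else (\<Sum>\<^sub>\<infinity> y \<in> I \<union> E. P x y * hit_prob I E P n y))"

definition qsd_gamma :: "'a set \<Rightarrow> ('a \<Rightarrow> 'a \<Rightarrow> real) \<Rightarrow> ('a \<Rightarrow> real) \<Rightarrow> real" where
  "qsd_gamma I P \<mu> = (\<Sum>\<^sub>\<infinity> (i, j) \<in> I \<times> I. \<mu> i * P i j)"

definition pi_law :: "'a set \<Rightarrow> 'a set \<Rightarrow> ('a \<Rightarrow> 'a \<Rightarrow> real) \<Rightarrow> ('a \<Rightarrow> real) \<Rightarrow> 'a \<Rightarrow> real" where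
  "pi_law I E P \<mu> x =
     (if x \<in> I then qsd_gamma I P \<mu> * \<mu> x
      else if x \<in> E then (\<Sum>\<^sub>\<infinity> i \<in> I. \<mu> i * P i x) else 0)"

definition P_pi :: "'a set \<Rightarrow> 'a set \<Rightarrow> ('a \<Rightarrow> 'a \<Rightarrow> real) \<Rightarrow> ('a \<Rightarrow> real) \<Rightarrow> 'a \<Rightarrow> 'a \<Rightarrow> real" where
  "P_pi I E P \<mu> x y = (if x \<in> E then pi_law I E P \<mu> y else P x y)"

text \<open>The matrix A on I^2 \<times> E*, with E* = E \<union> {o}; the extra point o is the parameter ob.\<close>
definition A_mat :: "'a \<Rightarrow> ('a \<Rightarrow> 'a \<Rightarrow> real) \<Rightarrow> ('a \<Rightarrow> real)
                     \<Rightarrow> 'a \<times> 'a \<times> 'a \<Rightarrow> 'a \<times> 'a \<times> 'a \<Rightarrow> real" where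
  "A_mat ob P \<mu> s t =
     (case s of (i, j, \<delta>) \<Rightarrow> case t of (l, k, \<epsilon>) \<Rightarrow>
        if l \<noteq> j then 0 else if \<epsilon> = ob then P j k else P j \<epsilon> * \<mu> k)"

definition eta_law :: "'a set \<Rightarrow> 'a \<Rightarrow> ('a \<Rightarrow> 'a \<Rightarrow> real) \<Rightarrow> ('a \<Rightarrow> real) \<Rightarrow> 'a \<times> 'a \<times> 'a \<Rightarrow> real" where
  "eta_law E ob P \<mu> s =
     (case s of (i, j, \<delta>) \<Rightarrow>
        (if \<delta> = ob then \<mu> i * P i j else 0) + (if \<delta> \<in> E then \<mu> i * P i \<delta> * \<mu> j else 0))"

end

theory Submission
  imports Defs
begin


lemma nn_union:
  assumes "A \<inter> B = {}"
  shows "(\<integral>\<^sup>+x. f x \<partial>count_space (A \<union> B)) = (\<integral>\<^sup>+x. f x \<partial>count_space A) + (\<integral>\<^sup>+x. f x \<partial>count_space B)"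
proof -
  have "(\<integral>\<^sup>+x. f x \<partial>count_space (A \<union> B)) = (\<integral>\<^sup>+x. f x * indicator (A \<union> B) x \<partial>count_space UNIV)"
    by (subst nn_integral_count_space_indicator) auto
  also have "\<dots> = (\<integral>\<^sup>+x. f x * indicator A x + f x * indicator B x \<partial>count_space UNIV)"
    using assms by (intro nn_integral_cong) (auto split: split_indicator)
  also have "\<dots> = (\<integral>\<^sup>+x. f x * indicator A x \<partial>count_space UNIV) + (\<integral>\<^sup>+x. f x * indicator B x \<partial>count_space UNIV)"
    by (rule nn_integral_add) auto
  finally show ?thesis by (simp add: nn_integral_count_space_indicator)
qed

lemma nn_point:
  assumes "a \<in> S"
  shows "(\<integral>\<^sup>+x. f x * indicator {a} x \<partial>count_space S) = f a"
  using assms by (subst nn_integral_indicator_singleton) auto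

lemma nn_swap:
  assumes "countable A" "countable B"
  shows "(\<integral>\<^sup>+x. \<integral>\<^sup>+y. f x y \<partial>count_space B \<partial>count_space A) = (\<integral>\<^sup>+y. \<integral>\<^sup>+x. f x y \<partial>count_space A \<partial>count_space B)"
  using nn_integral_count_space_nn_integral[of A "\<lambda>x y. f x y" "count_space B"] assms by auto

lemma nn_prod:
  assumes "countable A" "countable B"
  shows "(\<integral>\<^sup>+z. f z \<partial>count_space (A \<times> B)) = (\<integral>\<^sup>+x. \<integral>\<^sup>+y. f (x, y) \<partial>count_space B \<partial>count_space A)"
proof -
  have cAB: "countable (A \<times> B)" using assms by auto
  have "(\<integral>\<^sup>+x. \<integral>\<^sup>+y. f (x, y) \<partial>count_space B \<partial>count_space A) =
        (\<integral>\<^sup>+x. \<integral>\<^sup>+y. \<integral>\<^sup>+z. f z * indicator {(x,y)} z \<partial>count_space (A \<times> B) \<partial>count_space B \<partial>count_space A)"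
    by (intro nn_integral_cong, subst nn_point) auto
  also have "\<dots> = (\<integral>\<^sup>+x. \<integral>\<^sup>+z. \<integral>\<^sup>+y. f z * indicator {(x,y)} z \<partial>count_space B \<partial>count_space (A \<times> B) \<partial>count_space A)"
    by (intro nn_integral_cong nn_swap assms cAB)
  also have "\<dots> = (\<integral>\<^sup>+z. \<integral>\<^sup>+x. \<integral>\<^sup>+y. f z * indicator {(x,y)} z \<partial>count_space B \<partial>count_space A \<partial>count_space (A \<times> B))"
    by (intro nn_swap assms cAB)
  also have "\<dots> = (\<integral>\<^sup>+z. f z \<partial>count_space (A \<times> B))"
  proof (intro nn_integral_cong)
    fix z assume "z \<in> space (count_space (A \<times> B))"
    then obtain a b where z: "z = (a, b)" "a \<in> A" "b \<in> B" by auto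
    have "(\<integral>\<^sup>+x. \<integral>\<^sup>+y. f z * indicator {(x,y)} z \<partial>count_space B \<partial>count_space A)
       = (\<integral>\<^sup>+x. (\<integral>\<^sup>+y. f z * indicator {x} a * indicator {b} y \<partial>count_space B) \<partial>count_space A)"
      using z by (intro nn_integral_cong) (auto split: split_indicator)
    also have "\<dots> = (\<integral>\<^sup>+x. f z * indicator {a} x \<partial>count_space A)"
      using z by (intro nn_integral_cong, subst nn_point) (auto split: split_indicator)
    also have "\<dots> = f z" using z by (subst nn_point) auto
    finally show "(\<integral>\<^sup>+x. \<integral>\<^sup>+y. f z * indicator {(x,y)} z \<partial>count_space B \<partial>count_space A) = f z" .
  qed
  finally show ?thesis ..
qed

lemma hs_nn:
  assumes "(f has_sum s) A" "\<And>x. x \<in> A \<Longrightarrow> f x \<ge> 0"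
  shows "(\<integral>\<^sup>+x. ennreal (f x) \<partial>count_space A) = ennreal s"
proof -
  have sm: "f summable_on A" using assms(1) by (rule has_sum_imp_summable)
  have "(\<lambda>x. norm (f x)) summable_on A"
    using sm assms(2) by (metis (no_types, lifting) real_norm_def summable_on_cong abs_of_nonneg)
  then have "Infinite_Set_Sum.abs_summable_on f A" using abs_summable_equivalent[of f A] by simp
  then show ?thesis
    using assms by (simp add: nn_integral_conv_infsetsum infsetsum_infsum infsumI)
qed

lemma nn_infsum:
  assumes "(\<integral>\<^sup>+x. ennreal (f x) \<partial>count_space A) \<noteq> \<infinity>" "\<And>x. x \<in> A \<Longrightarrow> f x \<ge> 0"
  shows "(\<integral>\<^sup>+x. ennreal (f x) \<partial>count_space A) = ennreal (infsum f A)"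
proof -
  have "integrable (count_space A) f"
    using assms by (intro integrableI_nonneg) (auto simp: AE_count_space less_top)
  then have ab: "Infinite_Set_Sum.abs_summable_on f A" by (simp add: Infinite_Set_Sum.abs_summable_on_def)
  then show ?thesis using assms
    by (simp add: nn_integral_conv_infsetsum infsetsum_infsum)
qed

lemma nn_ge_point:
  assumes "x \<in> A"
  shows "f x \<le> (\<integral>\<^sup>+y. f y \<partial>count_space A)"
proof -
  have "f x = (\<integral>\<^sup>+y. f y * indicator {x} y \<partial>count_space A)" using assms by (simp add: nn_point)
  also have "\<dots> \<le> (\<integral>\<^sup>+y. f y \<partial>count_space A)"
    by (intro nn_integral_mono) (auto split: split_indicator)
  finally show ?thesis .
qed

lemma phi_nonneg: "0 \<le> x \<Longrightarrow> x \<le> (1::real) \<Longrightarrow> 0 \<le> - (x * ln x)"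
  by (cases "x = 0") (auto simp: mult_nonneg_nonpos)

lemma phi_mult:
  fixes x y :: real
  assumes "0 \<le> x" "x \<le> 1" "0 \<le> y" "y \<le> 1"
  shows "ennreal (- (x * y * ln (x * y))) = ennreal (y * - (x * ln x)) + ennreal x * ennreal (- (y * ln y))"
proof (cases "x = 0 \<or> y = 0")
  case True then show ?thesis by auto
next
  case False
  then have "x > 0" "y > 0" using assms by auto
  then have "- (x * y * ln (x * y)) = y * - (x * ln x) + x * - (y * ln y)"
    by (simp add: ln_mult algebra_simps)
  moreover have "0 \<le> y * - (x * ln x)" "0 \<le> x * - (y * ln y)"
    using phi_nonneg[of x] phi_nonneg[of y] assms by (auto simp: mult_nonneg_nonpos)
  ultimately show ?thesis using assms
    by (simp only: ennreal_plus ennreal_mult[symmetric]) (metis ennreal_mult' mult_minus_right assms(1))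
qed

lemma ennreal_add_eq1:
  assumes "a + ennreal c = 1" "0 \<le> c"
  shows "a = ennreal (1 - c)"
proof (cases a)
  case (real r)
  then have "ennreal (r + c) = 1" using assms by (simp add: ennreal_plus)
  then have "r + c = 1" by simp
  then show ?thesis using real by (simp add: algebra_simps)
next
  case top then show ?thesis using assms by simp
qed



theorem proposition5:
  fixes I E :: "'a set" and ob :: 'a
    and P :: "'a \<Rightarrow> 'a \<Rightarrow> real" and \<mu> :: "'a \<Rightarrow> real"
  assumes cI: "countable I" and cE: "countable E"
    and disj: "I \<inter> E = {}" and Ene: "E \<noteq> {}"
    and ob: "ob \<notin> I \<union> E"
    and P_nonneg: "\<And>x y. x \<in> I \<union> E \<Longrightarrow> y \<in> I \<union> E \<Longrightarrow> P x y \<ge> 0"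
    and P_stoch: "\<And>x. x \<in> I \<union> E \<Longrightarrow> (P x has_sum 1) (I \<union> E)"
    and absorbing: "\<And>\<epsilon>. \<epsilon> \<in> E \<Longrightarrow> P \<epsilon> \<epsilon> = 1"
    and irred: "\<And>i j. i \<in> I \<Longrightarrow> j \<in> I \<Longrightarrow>
                 (i, j) \<in> {(x, y). x \<in> I \<and> y \<in> I \<and> P x y > 0}\<^sup>*"
    and exits: "\<exists>i\<in>I. \<exists>\<epsilon>\<in>E. P i \<epsilon> > 0"
    and absorb_as: "\<And>i. i \<in> I \<Longrightarrow> (\<lambda>n. hit_prob I E P n i) \<longlonglongrightarrow> 1"
    and mu_nonneg: "\<And>i. i \<in> I \<Longrightarrow> \<mu> i \<ge> 0"
    and mu_prob: "(\<mu> has_sum 1) I"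
    and qsd: "\<And>j. j \<in> I \<Longrightarrow> ((\<lambda>i. \<mu> i * P i j) has_sum qsd_gamma I P \<mu> * \<mu> j) I"
    and gamma: "0 < qsd_gamma I P \<mu>" "qsd_gamma I P \<mu> < 1"
  shows
    "let \<pi> = pi_law I E P \<mu>;
         \<pi>I = (\<Sum>\<^sub>\<infinity> x \<in> I. \<pi> x);
         \<pi>E = (\<Sum>\<^sub>\<infinity> x \<in> E. \<pi> x);
         q = (\<lambda>\<delta>. \<pi> \<delta> / \<pi>E)
     in ent_rate (P_pi I E P \<mu>) \<pi> (I \<union> E)
        = ennreal \<pi>I * ent_rate (A_mat ob P \<mu>) (eta_law E ob P \<mu>) (I \<times> I \<times> (E \<union> {ob}))
          + ennreal (\<pi>E ^ 2) * ent_rate (\<lambda>a b. q b) q E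
          + ennreal (- (\<pi>I * \<pi>E * ln \<pi>I))
          + ennreal (- (\<pi>E ^ 2 * ln \<pi>E))"
proof -
  define \<gamma> where "\<gamma> = qsd_gamma I P \<mu>"
  define g where "g = 1 - \<gamma>"
  define \<pi> where "\<pi> = pi_law I E P \<mu>"
  have g0: "0 < g" "g \<le> 1" "0 < \<gamma>" "\<gamma> \<le> 1" using gamma unfolding g_def \<gamma>_def by auto
  have cIE: "countable (I \<union> E)" using cI cE by auto
  have notE: "x \<in> I \<Longrightarrow> x \<notin> E" for x using disj by auto
  have pi_I: "x \<in> I \<Longrightarrow> \<pi> x = \<gamma> * \<mu> x" for x by (simp add: \<pi>_def pi_law_def \<gamma>_def)
  have pi_E: "x \<in> E \<Longrightarrow> \<pi> x = (\<Sum>\<^sub>\<infinity> i\<in>I. \<mu> i * P i x)" for x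
    using notE by (auto simp: \<pi>_def pi_law_def)
  have F1: "(\<integral>\<^sup>+i. ennreal (\<mu> i) \<partial>count_space I) = 1"
    using hs_nn[OF mu_prob] mu_nonneg by simp
  have mu_le: "i \<in> I \<Longrightarrow> \<mu> i \<le> 1" for i
    using nn_ge_point[of i I "\<lambda>i. ennreal (\<mu> i)"] F1 by simp
  have F2: "x \<in> I \<union> E \<Longrightarrow> (\<integral>\<^sup>+y. ennreal (P x y) \<partial>count_space (I \<union> E)) = 1" for x
    using hs_nn[OF P_stoch[of x]] P_nonneg[of x] by simp
  have F2s: "x \<in> I \<union> E \<Longrightarrow> (\<integral>\<^sup>+y. ennreal (P x y) \<partial>count_space I) + (\<integral>\<^sup>+y. ennreal (P x y) \<partial>count_space E) = 1" for x
    using F2[of x] nn_union[OF disj] by simp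
  have P_le: "x \<in> I \<union> E \<Longrightarrow> y \<in> I \<union> E \<Longrightarrow> P x y \<le> 1" for x y
    using nn_ge_point[of y "I \<union> E" "\<lambda>y. ennreal (P x y)"] F2[of x] by simp
  have F3: "j \<in> I \<Longrightarrow> (\<integral>\<^sup>+i. ennreal (\<mu> i * P i j) \<partial>count_space I) = ennreal (\<gamma> * \<mu> j)" for j
    using hs_nn[OF qsd[of j]] mu_nonneg P_nonneg unfolding \<gamma>_def by auto
  have F4: "ennreal (\<pi> e) = (\<integral>\<^sup>+i. ennreal (\<mu> i * P i e) \<partial>count_space I)" if e: "e \<in> E" for e
  proof -
    have "(\<integral>\<^sup>+i. ennreal (\<mu> i * P i e) \<partial>count_space I) \<le> (\<integral>\<^sup>+i. ennreal (\<mu> i) \<partial>count_space I)"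
      using e mu_nonneg P_le by (intro nn_integral_mono ennreal_leI) (auto simp: mult_left_le)
    then have "(\<integral>\<^sup>+i. ennreal (\<mu> i * P i e) \<partial>count_space I) \<noteq> \<infinity>" using F1 by (auto simp: top_unique)
    then show ?thesis using nn_infsum[where f="\<lambda>i. \<mu> i * P i e" and A=I] e pi_E mu_nonneg P_nonneg by auto
  qed
  have W: "(\<integral>\<^sup>+i. ennreal (\<mu> i) * (\<integral>\<^sup>+y. ennreal (P i y) \<partial>count_space I) \<partial>count_space I) = ennreal \<gamma>"
  proof -
    have "(\<integral>\<^sup>+i. ennreal (\<mu> i) * (\<integral>\<^sup>+y. ennreal (P i y) \<partial>count_space I) \<partial>count_space I)
       = (\<integral>\<^sup>+i. \<integral>\<^sup>+y. ennreal (\<mu> i * P i y) \<partial>count_space I \<partial>count_space I)"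
      by (intro nn_integral_cong, subst nn_integral_cmult[symmetric], simp, intro nn_integral_cong)
         (simp add: ennreal_mult mu_nonneg P_nonneg)
    also have "\<dots> = (\<integral>\<^sup>+y. \<integral>\<^sup>+i. ennreal (\<mu> i * P i y) \<partial>count_space I \<partial>count_space I)"
      by (rule nn_swap[OF cI cI])
    also have "\<dots> = (\<integral>\<^sup>+y. ennreal \<gamma> * ennreal (\<mu> y) \<partial>count_space I)"
      by (intro nn_integral_cong) (simp add: F3 ennreal_mult mu_nonneg g0 less_imp_le)
    also have "\<dots> = ennreal \<gamma>" by (simp add: nn_integral_cmult F1)
    finally show ?thesis .
  qed
  have Z: "(\<integral>\<^sup>+i. ennreal (\<mu> i) * (\<integral>\<^sup>+y. ennreal (P i y) \<partial>count_space E) \<partial>count_space I) = ennreal g"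
  proof -
    have "1 = (\<integral>\<^sup>+i. ennreal (\<mu> i) * ((\<integral>\<^sup>+y. ennreal (P i y) \<partial>count_space I) + (\<integral>\<^sup>+y. ennreal (P i y) \<partial>count_space E)) \<partial>count_space I)"
      using F1 F2s by (metis (no_types, lifting) UnI1 mult.right_neutral nn_integral_cong space_count_space)
    also have "\<dots> = (\<integral>\<^sup>+i. ennreal (\<mu> i) * (\<integral>\<^sup>+y. ennreal (P i y) \<partial>count_space E) \<partial>count_space I) + ennreal \<gamma>"
      by (simp add: distrib_left nn_integral_add W add.commute)
    finally show ?thesis unfolding g_def using ennreal_add_eq1 g0 by (metis less_imp_le)
  qed
  have F5: "(\<integral>\<^sup>+e. ennreal (\<pi> e) \<partial>count_space E) = ennreal g"
  proof -
    have "(\<integral>\<^sup>+e. ennreal (\<pi> e) \<partial>count_space E) = (\<integral>\<^sup>+e. \<integral>\<^sup>+i. ennreal (\<mu> i * P i e) \<partial>count_space I \<partial>count_space E)"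
      by (intro nn_integral_cong) (simp add: F4)
    also have "\<dots> = (\<integral>\<^sup>+i. \<integral>\<^sup>+e. ennreal (\<mu> i * P i e) \<partial>count_space E \<partial>count_space I)"
      by (rule nn_swap[OF cE cI])
    also have "\<dots> = (\<integral>\<^sup>+i. ennreal (\<mu> i) * (\<integral>\<^sup>+y. ennreal (P i y) \<partial>count_space E) \<partial>count_space I)"
      by (intro nn_integral_cong, subst nn_integral_cmult[symmetric], simp, intro nn_integral_cong)
         (simp add: ennreal_mult mu_nonneg P_nonneg)
    finally show ?thesis using Z by simp
  qed
  have pi_nonneg: "e \<in> E \<Longrightarrow> 0 \<le> \<pi> e" for e
    using pi_E mu_nonneg P_nonneg by (auto intro!: infsum_nonneg)
  have pi_le: "e \<in> E \<Longrightarrow> \<pi> e \<le> g" for e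
    using nn_ge_point[of e E "\<lambda>e. ennreal (\<pi> e)"] F5 g0 by simp
  have piE: "(\<Sum>\<^sub>\<infinity> x \<in> E. \<pi> x) = g"
    using nn_infsum[where f=\<pi> and A=E] F5 pi_nonneg g0 infsum_nonneg[of E \<pi>] by simp
  have piI: "(\<Sum>\<^sub>\<infinity> x \<in> I. \<pi> x) = \<gamma>"
  proof -
    have "((\<lambda>x. \<gamma> * \<mu> x) has_sum \<gamma> * 1) I" by (rule has_sum_cmult_right[OF mu_prob])
    moreover have "(\<Sum>\<^sub>\<infinity> x \<in> I. \<pi> x) = (\<Sum>\<^sub>\<infinity> x \<in> I. \<gamma> * \<mu> x)"
      by (rule infsum_cong) (simp add: pi_I)
    ultimately show ?thesis by (simp add: infsumI)
  qed
  define HP where "HP j = (\<integral>\<^sup>+b. ennreal (- (P j b * ln (P j b))) \<partial>count_space (I \<union> E))" for j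
  define H\<mu> where "H\<mu> = (\<integral>\<^sup>+k. ennreal (- (\<mu> k * ln (\<mu> k))) \<partial>count_space I)"
  define q where "q b = \<pi> b / g" for b
  define Hq where "Hq = (\<integral>\<^sup>+b. ennreal (- (q b * ln (q b))) \<partial>count_space E)"
  define M where "M = (\<integral>\<^sup>+j. ennreal (\<mu> j) * HP j \<partial>count_space I)"
  define PE where "PE j = (\<integral>\<^sup>+y. ennreal (P j y) \<partial>count_space E)" for j
  have q_nonneg: "b \<in> E \<Longrightarrow> 0 \<le> q b" for b using pi_nonneg g0 by (simp add: q_def)
  have q_le: "b \<in> E \<Longrightarrow> q b \<le> 1" for b using pi_le g0 by (simp add: q_def)
  have Nq: "(\<integral>\<^sup>+b. ennreal (q b) \<partial>count_space E) = 1"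
  proof -
    have "(\<integral>\<^sup>+b. ennreal (q b) \<partial>count_space E) = (\<integral>\<^sup>+b. ennreal (\<pi> b) * ennreal (1 / g) \<partial>count_space E)"
      using pi_nonneg g0 by (intro nn_integral_cong) (simp add: q_def ennreal_mult[symmetric])
    also have "\<dots> = ennreal g * ennreal (1 / g)" by (simp add: nn_integral_multc F5)
    also have "\<dots> = 1" using g0 by (simp add: ennreal_mult[symmetric])
    finally show ?thesis .
  qed
  have LHS: "ent_rate (P_pi I E P \<mu>) \<pi> (I \<union> E) = ennreal \<gamma> * M + ennreal g *
     (ennreal (- (\<gamma> * ln \<gamma>)) + ennreal \<gamma> * H\<mu> + ennreal (- (g * ln g)) + ennreal g * Hq)"
  proof -
    define H\<pi> where "H\<pi> = (\<integral>\<^sup>+b. ennreal (- (\<pi> b * ln (\<pi> b))) \<partial>count_space (I \<union> E))"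
    have "ent_rate (P_pi I E P \<mu>) \<pi> (I \<union> E) =
       (\<integral>\<^sup>+a. ennreal (\<pi> a) * (\<integral>\<^sup>+b. ennreal (- (P_pi I E P \<mu> a b * ln (P_pi I E P \<mu> a b))) \<partial>count_space (I \<union> E)) \<partial>count_space I)
     + (\<integral>\<^sup>+a. ennreal (\<pi> a) * (\<integral>\<^sup>+b. ennreal (- (P_pi I E P \<mu> a b * ln (P_pi I E P \<mu> a b))) \<partial>count_space (I \<union> E)) \<partial>count_space E)"
      unfolding ent_rate_def by (rule nn_union[OF disj])
    also have "(\<integral>\<^sup>+a. ennreal (\<pi> a) * (\<integral>\<^sup>+b. ennreal (- (P_pi I E P \<mu> a b * ln (P_pi I E P \<mu> a b))) \<partial>count_space (I \<union> E)) \<partial>count_space I)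
       = (\<integral>\<^sup>+a. ennreal \<gamma> * (ennreal (\<mu> a) * HP a) \<partial>count_space I)"
      using notE pi_I g0 mu_nonneg
      by (intro nn_integral_cong) (simp add: P_pi_def HP_def ennreal_mult mult.assoc)
    also have "\<dots> = ennreal \<gamma> * M" by (simp add: nn_integral_cmult M_def)
    also have "(\<integral>\<^sup>+a. ennreal (\<pi> a) * (\<integral>\<^sup>+b. ennreal (- (P_pi I E P \<mu> a b * ln (P_pi I E P \<mu> a b))) \<partial>count_space (I \<union> E)) \<partial>count_space E)
       = (\<integral>\<^sup>+a. ennreal (\<pi> a) * H\<pi> \<partial>count_space E)"
      by (intro nn_integral_cong) (simp add: P_pi_def H\<pi>_def \<pi>_def)
    also have "\<dots> = ennreal g * H\<pi>" by (simp add: nn_integral_multc F5)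
    also have "H\<pi> = (\<integral>\<^sup>+b. ennreal (- (\<pi> b * ln (\<pi> b))) \<partial>count_space I) + (\<integral>\<^sup>+b. ennreal (- (\<pi> b * ln (\<pi> b))) \<partial>count_space E)"
      unfolding H\<pi>_def by (rule nn_union[OF disj])
    also have "(\<integral>\<^sup>+b. ennreal (- (\<pi> b * ln (\<pi> b))) \<partial>count_space I)
        = (\<integral>\<^sup>+b. ennreal (\<mu> b) * ennreal (- (\<gamma> * ln \<gamma>)) + ennreal \<gamma> * ennreal (- (\<mu> b * ln (\<mu> b))) \<partial>count_space I)"
    proof (intro nn_integral_cong)
      fix b assume "b \<in> space (count_space I)"
      then have b: "b \<in> I" by simp
      show "ennreal (- (\<pi> b * ln (\<pi> b))) = ennreal (\<mu> b) * ennreal (- (\<gamma> * ln \<gamma>)) + ennreal \<gamma> * ennreal (- (\<mu> b * ln (\<mu> b)))"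
        using phi_mult[of \<gamma> "\<mu> b"] b pi_I g0 mu_nonneg mu_le ennreal_mult[of "\<mu> b" "- (\<gamma> * ln \<gamma>)"] phi_nonneg[of \<gamma>]
        by simp
    qed
    also have "\<dots> = ennreal (- (\<gamma> * ln \<gamma>)) + ennreal \<gamma> * H\<mu>"
      by (simp add: nn_integral_add nn_integral_multc nn_integral_cmult F1 H\<mu>_def)
    also have "(\<integral>\<^sup>+b. ennreal (- (\<pi> b * ln (\<pi> b))) \<partial>count_space E)
        = (\<integral>\<^sup>+b. ennreal (q b) * ennreal (- (g * ln g)) + ennreal g * ennreal (- (q b * ln (q b))) \<partial>count_space E)"
    proof (intro nn_integral_cong)
      fix b assume "b \<in> space (count_space E)"
      then have b: "b \<in> E" by simp
      have "\<pi> b = g * q b" using g0 by (simp add: q_def)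
      then show "ennreal (- (\<pi> b * ln (\<pi> b))) = ennreal (q b) * ennreal (- (g * ln g)) + ennreal g * ennreal (- (q b * ln (q b)))"
        using phi_mult[of g "q b"] b g0 q_nonneg q_le ennreal_mult[of "q b" "- (g * ln g)"] phi_nonneg[of g]
        by simp
    qed
    also have "\<dots> = ennreal (- (g * ln g)) + ennreal g * Hq"
      by (simp add: nn_integral_add nn_integral_multc nn_integral_cmult Nq Hq_def)
    finally show ?thesis by (simp add: algebra_simps)
  qed
  have HG: "ent_rate (\<lambda>a b. q b) q E = Hq"
    unfolding ent_rate_def Hq_def[symmetric] by (simp add: nn_integral_multc Nq)
  have cEo: "countable (E \<union> {ob})" using cE by auto
  have cT: "countable (I \<times> (E \<union> {ob}))" using cI cEo by auto
  have Eob: "E \<inter> {ob} = {}" using ob by auto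
  have R: "(\<integral>\<^sup>+t. ennreal (- (A_mat ob P \<mu> (i, j, \<delta>) t * ln (A_mat ob P \<mu> (i, j, \<delta>) t))) \<partial>count_space (I \<times> I \<times> (E \<union> {ob})))
           = HP j + PE j * H\<mu>" if j: "j \<in> I" for i j \<delta>
  proof -
    define C where "C = (\<integral>\<^sup>+k. \<integral>\<^sup>+\<epsilon>. ennreal (- ((if \<epsilon> = ob then P j k else P j \<epsilon> * \<mu> k) * ln (if \<epsilon> = ob then P j k else P j \<epsilon> * \<mu> k))) \<partial>count_space (E \<union> {ob}) \<partial>count_space I)"
    have "(\<integral>\<^sup>+t. ennreal (- (A_mat ob P \<mu> (i, j, \<delta>) t * ln (A_mat ob P \<mu> (i, j, \<delta>) t))) \<partial>count_space (I \<times> I \<times> (E \<union> {ob})))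
      = (\<integral>\<^sup>+l. \<integral>\<^sup>+k. \<integral>\<^sup>+\<epsilon>. ennreal (- (A_mat ob P \<mu> (i, j, \<delta>) (l,k,\<epsilon>) * ln (A_mat ob P \<mu> (i, j, \<delta>) (l,k,\<epsilon>)))) \<partial>count_space (E \<union> {ob}) \<partial>count_space I \<partial>count_space I)"
      by (subst nn_prod[OF cI cT], intro nn_integral_cong, subst nn_prod[OF cI cEo], rule refl)
    also have "\<dots> = (\<integral>\<^sup>+l. C * indicator {j} l \<partial>count_space I)"
      by (intro nn_integral_cong) (auto simp: C_def A_mat_def split: split_indicator)
    also have "\<dots> = C" using nn_point[OF j, of "\<lambda>_. C"] by simp
    also have "C = (\<integral>\<^sup>+k. (\<integral>\<^sup>+\<epsilon>. ennreal (- (P j \<epsilon> * \<mu> k * ln (P j \<epsilon> * \<mu> k))) \<partial>count_space E) + ennreal (- (P j k * ln (P j k))) \<partial>count_space I)"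
      unfolding C_def
    proof (intro nn_integral_cong)
      fix k
      have "(\<integral>\<^sup>+\<epsilon>. ennreal (- ((if \<epsilon> = ob then P j k else P j \<epsilon> * \<mu> k) * ln (if \<epsilon> = ob then P j k else P j \<epsilon> * \<mu> k))) \<partial>count_space (E \<union> {ob}))
        = (\<integral>\<^sup>+\<epsilon>. ennreal (- ((if \<epsilon> = ob then P j k else P j \<epsilon> * \<mu> k) * ln (if \<epsilon> = ob then P j k else P j \<epsilon> * \<mu> k))) \<partial>count_space E)
        + (\<integral>\<^sup>+\<epsilon>. ennreal (- ((if \<epsilon> = ob then P j k else P j \<epsilon> * \<mu> k) * ln (if \<epsilon> = ob then P j k else P j \<epsilon> * \<mu> k))) \<partial>count_space {ob})"
        by (rule nn_union[OF Eob])
      also have "(\<integral>\<^sup>+\<epsilon>. ennreal (- ((if \<epsilon> = ob then P j k else P j \<epsilon> * \<mu> k) * ln (if \<epsilon> = ob then P j k else P j \<epsilon> * \<mu> k))) \<partial>count_space E)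
        = (\<integral>\<^sup>+\<epsilon>. ennreal (- (P j \<epsilon> * \<mu> k * ln (P j \<epsilon> * \<mu> k))) \<partial>count_space E)"
        using ob by (intro nn_integral_cong) auto
      finally show "(\<integral>\<^sup>+\<epsilon>. ennreal (- ((if \<epsilon> = ob then P j k else P j \<epsilon> * \<mu> k) * ln (if \<epsilon> = ob then P j k else P j \<epsilon> * \<mu> k))) \<partial>count_space (E \<union> {ob}))
        = (\<integral>\<^sup>+\<epsilon>. ennreal (- (P j \<epsilon> * \<mu> k * ln (P j \<epsilon> * \<mu> k))) \<partial>count_space E) + ennreal (- (P j k * ln (P j k)))"
        by (simp add: nn_integral_count_space_finite)
    qed
    also have "\<dots> = (\<integral>\<^sup>+k. \<integral>\<^sup>+\<epsilon>. ennreal (- (P j \<epsilon> * \<mu> k * ln (P j \<epsilon> * \<mu> k))) \<partial>count_space E \<partial>count_space I)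
        + (\<integral>\<^sup>+k. ennreal (- (P j k * ln (P j k))) \<partial>count_space I)"
      by (simp add: nn_integral_add)
    also have "(\<integral>\<^sup>+k. \<integral>\<^sup>+\<epsilon>. ennreal (- (P j \<epsilon> * \<mu> k * ln (P j \<epsilon> * \<mu> k))) \<partial>count_space E \<partial>count_space I)
        = (\<integral>\<^sup>+\<epsilon>. \<integral>\<^sup>+k. ennreal (- (P j \<epsilon> * \<mu> k * ln (P j \<epsilon> * \<mu> k))) \<partial>count_space I \<partial>count_space E)"
      by (rule nn_swap[OF cI cE])
    also have "\<dots> = (\<integral>\<^sup>+\<epsilon>. \<integral>\<^sup>+k. ennreal (\<mu> k) * ennreal (- (P j \<epsilon> * ln (P j \<epsilon>))) + ennreal (P j \<epsilon>) * ennreal (- (\<mu> k * ln (\<mu> k))) \<partial>count_space I \<partial>count_space E)"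
    proof (intro nn_integral_cong)
      fix \<epsilon> k assume "\<epsilon> \<in> space (count_space E)" "k \<in> space (count_space I)"
      then have e: "\<epsilon> \<in> E" and k: "k \<in> I" by auto
      show "ennreal (- (P j \<epsilon> * \<mu> k * ln (P j \<epsilon> * \<mu> k))) = ennreal (\<mu> k) * ennreal (- (P j \<epsilon> * ln (P j \<epsilon>))) + ennreal (P j \<epsilon>) * ennreal (- (\<mu> k * ln (\<mu> k)))"
        using phi_mult[of "P j \<epsilon>" "\<mu> k"] e k j P_nonneg[of j \<epsilon>] P_le[of j \<epsilon>] mu_nonneg[of k] mu_le[of k]
          ennreal_mult[of "\<mu> k" "- (P j \<epsilon> * ln (P j \<epsilon>))"] phi_nonneg[of "P j \<epsilon>"]
        by simp
    qed
    also have "\<dots> = (\<integral>\<^sup>+\<epsilon>. ennreal (- (P j \<epsilon> * ln (P j \<epsilon>))) + ennreal (P j \<epsilon>) * H\<mu> \<partial>count_space E)"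
      by (intro nn_integral_cong) (simp add: nn_integral_add nn_integral_multc nn_integral_cmult F1 H\<mu>_def)
    also have "\<dots> = (\<integral>\<^sup>+\<epsilon>. ennreal (- (P j \<epsilon> * ln (P j \<epsilon>))) \<partial>count_space E) + PE j * H\<mu>"
      by (simp add: nn_integral_add nn_integral_multc PE_def)
    also have "HP j = (\<integral>\<^sup>+b. ennreal (- (P j b * ln (P j b))) \<partial>count_space I) + (\<integral>\<^sup>+b. ennreal (- (P j b * ln (P j b))) \<partial>count_space E)"
      unfolding HP_def by (rule nn_union[OF disj])
    ultimately show ?thesis by (simp add: algebra_simps)
  qed
  have ETA: "(\<integral>\<^sup>+i. \<integral>\<^sup>+\<delta>. ennreal (eta_law E ob P \<mu> (i, j, \<delta>)) \<partial>count_space (E \<union> {ob}) \<partial>count_space I) = ennreal (\<mu> j)"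
    if j: "j \<in> I" for j
  proof -
    have "(\<integral>\<^sup>+i. \<integral>\<^sup>+\<delta>. ennreal (eta_law E ob P \<mu> (i, j, \<delta>)) \<partial>count_space (E \<union> {ob}) \<partial>count_space I)
       = (\<integral>\<^sup>+i. ennreal (\<mu> j) * (ennreal (\<mu> i) * PE i) + ennreal (\<mu> i * P i j) \<partial>count_space I)"
    proof (intro nn_integral_cong)
      fix i assume "i \<in> space (count_space I)"
      then have i: "i \<in> I" by simp
      have "(\<integral>\<^sup>+\<delta>. ennreal (eta_law E ob P \<mu> (i, j, \<delta>)) \<partial>count_space (E \<union> {ob}))
        = (\<integral>\<^sup>+\<delta>. ennreal (eta_law E ob P \<mu> (i, j, \<delta>)) \<partial>count_space E) + (\<integral>\<^sup>+\<delta>. ennreal (eta_law E ob P \<mu> (i, j, \<delta>)) \<partial>count_space {ob})"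
        by (rule nn_union[OF Eob])
      also have "(\<integral>\<^sup>+\<delta>. ennreal (eta_law E ob P \<mu> (i, j, \<delta>)) \<partial>count_space E)
          = (\<integral>\<^sup>+\<delta>. ennreal (\<mu> j) * (ennreal (\<mu> i) * ennreal (P i \<delta>)) \<partial>count_space E)"
        using ob i j mu_nonneg P_nonneg
        by (intro nn_integral_cong) (auto simp: eta_law_def ennreal_mult[symmetric] mult_ac)
      also have "\<dots> = ennreal (\<mu> j) * (ennreal (\<mu> i) * PE i)"
        by (simp add: nn_integral_cmult PE_def)
      also have "(\<integral>\<^sup>+\<delta>. ennreal (eta_law E ob P \<mu> (i, j, \<delta>)) \<partial>count_space {ob}) = ennreal (\<mu> i * P i j)"
        using ob by (simp add: nn_integral_count_space_finite eta_law_def)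
      finally show "(\<integral>\<^sup>+\<delta>. ennreal (eta_law E ob P \<mu> (i, j, \<delta>)) \<partial>count_space (E \<union> {ob}))
         = ennreal (\<mu> j) * (ennreal (\<mu> i) * PE i) + ennreal (\<mu> i * P i j)" .
    qed
    also have "\<dots> = ennreal (\<mu> j) * ennreal g + ennreal (\<gamma> * \<mu> j)"
      using j by (simp add: nn_integral_add nn_integral_cmult F3 Z[unfolded PE_def[symmetric]])
    also have "\<dots> = ennreal (\<mu> j)"
    proof -
      have n1: "0 \<le> \<mu> j * g" "0 \<le> \<gamma> * \<mu> j" using j g0 mu_nonneg[of j] by auto
      have "ennreal (\<mu> j) * ennreal g + ennreal (\<gamma> * \<mu> j) = ennreal (\<mu> j * g + \<gamma> * \<mu> j)"
        using n1 j g0 mu_nonneg[of j] by (simp add: ennreal_mult)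
      also have "\<mu> j * g + \<gamma> * \<mu> j = \<mu> j" by (simp add: g_def algebra_simps)
      finally show ?thesis .
    qed
    finally show ?thesis .
  qed
  have HY: "ent_rate (A_mat ob P \<mu>) (eta_law E ob P \<mu>) (I \<times> I \<times> (E \<union> {ob})) = M + ennreal g * H\<mu>"
  proof -
    define RR where "RR j = HP j + PE j * H\<mu>" for j
    have "ent_rate (A_mat ob P \<mu>) (eta_law E ob P \<mu>) (I \<times> I \<times> (E \<union> {ob}))
      = (\<integral>\<^sup>+s. ennreal (eta_law E ob P \<mu> s) * RR (fst (snd s)) \<partial>count_space (I \<times> I \<times> (E \<union> {ob})))"
      unfolding ent_rate_def
    proof (intro nn_integral_cong)
      fix s assume "s \<in> space (count_space (I \<times> I \<times> (E \<union> {ob})))"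
      then obtain i j \<delta> where s: "s = (i, j, \<delta>)" and j: "j \<in> I" by auto
      show "ennreal (eta_law E ob P \<mu> s) * (\<integral>\<^sup>+t. ennreal (- (A_mat ob P \<mu> s t * ln (A_mat ob P \<mu> s t))) \<partial>count_space (I \<times> I \<times> (E \<union> {ob})))
         = ennreal (eta_law E ob P \<mu> s) * RR (fst (snd s))"
        unfolding s using R[OF j, of i \<delta>] by (simp add: RR_def)
    qed
    also have "\<dots> = (\<integral>\<^sup>+i. \<integral>\<^sup>+j. \<integral>\<^sup>+\<delta>. ennreal (eta_law E ob P \<mu> (i, j, \<delta>)) * RR j \<partial>count_space (E \<union> {ob}) \<partial>count_space I \<partial>count_space I)"
      by (subst nn_prod[OF cI cT], intro nn_integral_cong, subst nn_prod[OF cI cEo], simp)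
    also have "\<dots> = (\<integral>\<^sup>+i. \<integral>\<^sup>+j. (\<integral>\<^sup>+\<delta>. ennreal (eta_law E ob P \<mu> (i, j, \<delta>)) \<partial>count_space (E \<union> {ob})) * RR j \<partial>count_space I \<partial>count_space I)"
      by (simp add: nn_integral_multc)
    also have "\<dots> = (\<integral>\<^sup>+j. \<integral>\<^sup>+i. (\<integral>\<^sup>+\<delta>. ennreal (eta_law E ob P \<mu> (i, j, \<delta>)) \<partial>count_space (E \<union> {ob})) * RR j \<partial>count_space I \<partial>count_space I)"
      by (rule nn_swap[OF cI cI])
    also have "\<dots> = (\<integral>\<^sup>+j. ennreal (\<mu> j) * RR j \<partial>count_space I)"
      by (intro nn_integral_cong) (simp add: nn_integral_multc ETA[simplified])
    also have "\<dots> = M + (\<integral>\<^sup>+j. ennreal (\<mu> j) * PE j \<partial>count_space I) * H\<mu>"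
      by (simp add: RR_def distrib_left nn_integral_add nn_integral_multc M_def mult.assoc[symmetric])
    also have "\<dots> = M + ennreal g * H\<mu>"
      using Z by (simp add: PE_def)
    finally show ?thesis .
  qed
  have e1: "ennreal (g ^ 2) = ennreal g * ennreal g" using g0 by (simp add: power2_eq_square ennreal_mult)
  have e2: "ennreal (- (\<gamma> * g * ln \<gamma>)) = ennreal g * ennreal (- (\<gamma> * ln \<gamma>))"
    using g0 ennreal_mult'[of g "- (\<gamma> * ln \<gamma>)"] by (simp add: mult_ac)
  have e3: "ennreal (- (g ^ 2 * ln g)) = ennreal g * ennreal (- (g * ln g))"
    using g0 ennreal_mult'[of g "- (g * ln g)"] by (simp add: mult_ac power2_eq_square)
  have qq: "(\<lambda>\<delta>. \<pi> \<delta> / g) = q" by (simp add: q_def fun_eq_iff)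
  show ?thesis
    unfolding Let_def \<pi>_def[symmetric] piI piE qq LHS HG HY e1 e2 e3
    by (simp add: algebra_simps)
qed

end
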